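(* Let $A$ be a metrizable abelian topological group. Then $\hat A$ is a $k$-space.
   Context: $\mathbb{T}=\mathbb{R}/\mathbb{Z}$. $\hat A$ is the group of continuous homomorphisms $A\to\mathbb{T}$ with the compact-open topology. A Hausdorff space $X$ is a $k$-space if a subset $F\subseteq X$ is closed whenever $F\cap K$ is closed in $K$ for every compact $K\subseteq X$. *)

theory Defs
  imports "HOL-Analysis.Analysis"
begin

definition topological_ab_group :: "'a::ab_group_add topology \<Rightarrow> bool" where
  "topological_ab_group X \<longleftrightarrow>
     topspace X = UNIV \<and>
     continuous_map (prod_topology X X) X (\<lambda>(x, y). x + y) \<and>
     continuous_map X X uminus"

text \<open>The circle group T = R/Z, realised (isomorphically, via t \<mapsto> exp(2 pi i t))
  as the unit circle in the complex plane with multiplication and the subspace topology.\<close>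
definition circle_top :: "complex topology" where
  "circle_top = top_of_set (sphere 0 1)"

definition characters :: "'a::ab_group_add topology \<Rightarrow> ('a \<Rightarrow> complex) set" where
  "characters X = {c. continuous_map X circle_top c \<and> (\<forall>x y. c (x + y) = c x * c y)}"

definition compact_open_topology ::
  "'a topology \<Rightarrow> 'b topology \<Rightarrow> ('a \<Rightarrow> 'b) set \<Rightarrow> ('a \<Rightarrow> 'b) topology" where
  "compact_open_topology X Y D =
     topology_generated_by {{f \<in> D. f ` K \<subseteq> U} | K U. compactin X K \<and> openin Y U}"

definition dual_group :: "'a::ab_group_add topology \<Rightarrow> ('a \<Rightarrow> complex) topology" where
  "dual_group X = compact_open_topology X circle_top (characters X)"

end

theory Submission
  imports Defs
begin

definition chr_hom :: "('a::ab_group_add \<Rightarrow> complex) \<Rightarrow> bool" where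
  "chr_hom f \<longleftrightarrow> (\<forall>x y. f (x + y) = f x * f y) \<and> (\<forall>x. cmod (f x) = 1)"

lemma chr_hom_0: assumes "chr_hom f" shows "f 0 = 1"
proof -
  have "f 0 = f 0 * f 0" using assms unfolding chr_hom_def by (metis add.right_neutral)
  moreover have "f 0 \<noteq> 0" using assms unfolding chr_hom_def by (metis norm_zero zero_neq_one)
  ultimately show ?thesis by (metis mult_cancel_left1)
qed

lemma cmod1_inv: "cmod z = 1 \<Longrightarrow> z * cnj z = 1"
  by (metis complex_norm_square mult.commute of_real_1 power_one)

lemma chr_hom_minus: assumes "chr_hom f" shows "f (- x) = cnj (f x)"
proof -
  have "f x * f (-x) = 1" using assms chr_hom_0[OF assms] unfolding chr_hom_def
    by (metis add.right_inverse)
  moreover have "f x * cnj (f x) = 1" using assms cmod1_inv unfolding chr_hom_def by blast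
  ultimately show ?thesis
    by (metis mult.left_commute mult.right_neutral mult.commute)
qed

lemma chr_hom_diff: assumes "chr_hom f" shows "f (x - a) = f x * cnj (f a)"
  using assms chr_hom_minus[OF assms] unfolding chr_hom_def
  by (metis diff_conv_add_uminus)

lemma chr_hom_dist: assumes "chr_hom f" shows "cmod (f x - f a) = cmod (f (x - a) - 1)"
proof -
  have "f x = f (x - a) * f a" using assms unfolding chr_hom_def by (metis diff_add_cancel)
  hence "f x - f a = (f (x - a) - 1) * f a" by (simp add: algebra_simps)
  thus ?thesis using assms unfolding chr_hom_def by (simp add: norm_mult)
qed

definition dbl :: "nat \<Rightarrow> 'a::ab_group_add \<Rightarrow> 'a" where
  "dbl j = (\<lambda>y. y + y) ^^ j"

lemma chr_hom_dbl: assumes "chr_hom f" shows "f (dbl j x) = f x ^ (2 ^ j)"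
proof (induction j)
  case 0 then show ?case by (simp add: dbl_def)
next
  case (Suc j)
  have "dbl (Suc j) x = dbl j x + dbl j x" by (simp add: dbl_def)
  hence "f (dbl (Suc j) x) = f (dbl j x) * f (dbl j x)" using assms unfolding chr_hom_def by simp
  also have "\<dots> = f x ^ (2 ^ Suc j)" using Suc by (simp add: power_mult[symmetric] power2_eq_square[symmetric] mult.commute)
  finally show ?case .
qed

lemma circle_doubling:
  fixes w :: complex
  assumes "cmod w = 1" "\<forall>j\<le>k. Re (w ^ (2 ^ j)) \<ge> 0"
  shows "1 - Re w \<le> 1 / 2 ^ k"
  using assms
proof (induction k arbitrary: w)
  case 0
  then show ?case by simp
next
  case (Suc k)
  have m2: "cmod (w^2) = 1" using Suc.prems by (simp add: norm_power)
  have "\<forall>j\<le>k. Re ((w^2) ^ (2 ^ j)) \<ge> 0"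
  proof (intro allI impI)
    fix j assume "j \<le> k"
    have "(w^2) ^ (2 ^ j) = w ^ (2 ^ Suc j)" by (simp add: power_mult[symmetric])
    moreover have "Re (w ^ (2 ^ Suc j)) \<ge> 0" using Suc.prems(2) \<open>j \<le> k\<close> Suc_le_mono by blast
    ultimately show "Re ((w^2) ^ (2 ^ j)) \<ge> 0" by simp
  qed
  from Suc.IH[OF m2 this] have h: "1 - Re (w^2) \<le> 1 / 2 ^ k" .
  have x0: "Re w \<ge> 0" using Suc.prems(2)[rule_format, of 0] by simp
  have n: "(Re w)^2 + (Im w)^2 = 1" using Suc.prems(1) by (metis cmod_power2 power_one)
  have "Re (w^2) = (Re w)^2 - (Im w)^2" by (simp add: power2_eq_square)
  hence "1 - Re (w^2) = 2 * (1 - Re w) * (1 + Re w)" using n by (simp add: algebra_simps power2_eq_square)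
  hence "2 * (1 - Re w) \<le> 1 / 2 ^ k" using h x0
  proof -
    have "2 * (1 - Re w) \<le> 2 * (1 - Re w) * (1 + Re w)"
      using x0 Suc.prems(1) abs_Re_le_cmod[of w] by (intro mult_left_mono[of 1 "1 + Re w", simplified]) auto
    thus ?thesis using h by (metis \<open>1 - Re (w^2) = 2 * (1 - Re w) * (1 + Re w)\<close> order.trans)
  qed
  thus ?case by (simp add: field_simps)
qed

lemma circle_dist1:
  fixes w :: complex
  assumes "cmod w = 1"
  shows "(cmod (w - 1))^2 = 2 - 2 * Re w"
proof -
  have n: "(Re w)^2 + (Im w)^2 = 1" using assms by (metis cmod_power2 power_one)
  have "(cmod (w - 1))^2 = (Re w - 1)^2 + (Im w)^2" by (simp add: cmod_power2)
  thus ?thesis using n by (simp add: power2_eq_square algebra_simps)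
qed

lemma polar_estimate:
  assumes "chr_hom f" "\<forall>j\<le>k. Re (f (dbl j x)) \<ge> 0"
  shows "cmod (f x - 1) \<le> sqrt (2 / 2 ^ k)"
proof -
  have m: "cmod (f x) = 1" using assms(1) unfolding chr_hom_def by blast
  have "\<forall>j\<le>k. Re (f x ^ (2 ^ j)) \<ge> 0" using assms chr_hom_dbl[OF assms(1)] by metis
  from circle_doubling[OF m this] have "1 - Re (f x) \<le> 1 / 2 ^ k" .
  hence "2 * (1 - Re (f x)) \<le> 2 * (1 / 2 ^ k)" by simp
  hence "(cmod (f x - 1))^2 \<le> 2 / 2 ^ k" using circle_dist1[OF m] by simp
  thus ?thesis by (simp add: real_le_rsqrt)
qed

lemma small_pow2: assumes "(e::real) > 0" shows "\<exists>k. sqrt (2 / 2 ^ k) < e"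
proof -
  obtain k where "(1/2::real) ^ k < e^2 / 2" using real_arch_pow_inv[of "e^2/2" "1/2::real"] assms by auto
  hence "2 / 2 ^ k < e^2" by (simp add: power_one_over field_simps)
  hence "sqrt (2 / 2 ^ k) < sqrt (e^2)" by (simp only: real_sqrt_less_iff)
  thus ?thesis using assms by auto
qed

lemma chr_trivial:
  assumes "chr_hom w" "\<forall>y. Re (w y) \<ge> 0"
  shows "w y = 1"
proof -
  have "\<forall>e>0. cmod (w y - 1) < e"
  proof (intro allI impI)
    fix e :: real assume "e > 0"
    then obtain k where "sqrt (2 / 2 ^ k) < e" using small_pow2 by blast
    moreover have "cmod (w y - 1) \<le> sqrt (2 / 2 ^ k)" using polar_estimate[OF assms(1)] assms(2) by blast
    ultimately show "cmod (w y - 1) < e" by linarith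
  qed
  hence "cmod (w y - 1) = 0" by (metis norm_ge_zero order_less_irrefl order_neq_le_trans)
  thus ?thesis by simp
qed

lemma tg_add_cont:
  assumes "topological_ab_group X" shows "continuous_map X X (\<lambda>y. y + c)"
proof -
  have a: "continuous_map (prod_topology X X) X (\<lambda>(x, y). x + y)" using assms unfolding topological_ab_group_def by blast
  have "continuous_map X (prod_topology X X) (\<lambda>y. (y, c))"
    using assms unfolding topological_ab_group_def by (intro continuous_map_pairedI) (auto simp: continuous_map_id)
  from continuous_map_compose[OF this a] show ?thesis by (simp add: o_def)
qed

lemma tg_double_cont:
  assumes "topological_ab_group X" shows "continuous_map X X (\<lambda>y. y + y)"
proof -
  have a: "continuous_map (prod_topology X X) X (\<lambda>(x, y). x + y)" using assms unfolding topological_ab_group_def by blast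
  have "continuous_map X (prod_topology X X) (\<lambda>y. (y, y))"
    by (intro continuous_map_pairedI) (auto simp: continuous_map_id)
  from continuous_map_compose[OF this a] show ?thesis by (simp add: o_def)
qed

lemma tg_dbl_cont:
  assumes "topological_ab_group X" shows "continuous_map X X (dbl j)"
proof (induction j)
  case 0 then show ?case by (simp add: dbl_def continuous_map_id)
next
  case (Suc j)
  have "dbl (Suc j) = (\<lambda>y. y + y) \<circ> dbl j" by (simp add: dbl_def)
  show ?case unfolding \<open>dbl (Suc j) = (\<lambda>y. y + y) \<circ> dbl j\<close> by (rule continuous_map_compose[OF Suc tg_double_cont[OF assms]])
qed

lemma tg_open_translate:
  assumes "topological_ab_group X" "openin X U" shows "openin X {y. y - a \<in> U}"
proof -
  have "openin X {y \<in> topspace X. y + (- a) \<in> U}" by (rule openin_continuous_map_preimage[OF tg_add_cont[OF assms(1)] assms(2)])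
  moreover have "topspace X = UNIV" using assms(1) unfolding topological_ab_group_def by blast
  ultimately show ?thesis by simp
qed

lemma tg_open_dbl:
  assumes "topological_ab_group X" "openin X V" shows "openin X {x. \<forall>j\<le>k. dbl j x \<in> V}"
proof -
  have ts: "topspace X = UNIV" using assms(1) unfolding topological_ab_group_def by blast
  have "openin X (\<Inter>j \<in> {..k}. {x \<in> topspace X. dbl j x \<in> V})"
    by (intro openin_INT2) (auto intro: openin_continuous_map_preimage[OF tg_dbl_cont[OF assms(1)] assms(2)])
  moreover have "(\<Inter>j \<in> {..k}. {x \<in> topspace X. dbl j x \<in> V}) = {x. \<forall>j\<le>k. dbl j x \<in> V}" using ts by auto
  ultimately show ?thesis by simp
qed

lemma dbl_0: "dbl j (0::'a::ab_group_add) = 0"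
  by (induction j) (auto simp: dbl_def)

lemma polar_equicont:
  assumes "topological_ab_group X" "openin X V" "0 \<in> V" "e > 0"
  shows "\<exists>W. openin X W \<and> 0 \<in> W \<and> (\<forall>f. chr_hom f \<and> (\<forall>x\<in>V. Re (f x) \<ge> 0) \<longrightarrow>
            (\<forall>z a. z - a \<in> W \<longrightarrow> cmod (f z - f a) < e))"
proof -
  obtain k where k: "sqrt (2 / 2 ^ k) < e" using small_pow2 assms(4) by blast
  define W where "W = {x. \<forall>j\<le>k. dbl j x \<in> V}"
  have "openin X W" unfolding W_def by (rule tg_open_dbl[OF assms(1,2)])
  moreover have "0 \<in> W" unfolding W_def using assms(3) by (simp add: dbl_0)
  moreover have "cmod (f z - f a) < e" if f: "chr_hom f" "\<forall>x\<in>V. Re (f x) \<ge> 0" and za: "z - a \<in> W" for f z a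
  proof -
    have "\<forall>j\<le>k. Re (f (dbl j (z - a))) \<ge> 0" using za f(2) unfolding W_def by blast
    from polar_estimate[OF f(1) this] have "cmod (f (z - a) - 1) \<le> sqrt (2 / 2 ^ k)" .
    thus ?thesis using chr_hom_dist[OF f(1)] k by simp
  qed
  ultimately show ?thesis by blast
qed

lemma metrizable_base:
  assumes "metrizable_space X" "(a::'a) \<in> topspace X"
  shows "\<exists>V::nat \<Rightarrow> 'a set. (\<forall>n. openin X (V n) \<and> a \<in> V n \<and> V (Suc n) \<subseteq> V n) \<and>
            (\<forall>U. openin X U \<and> a \<in> U \<longrightarrow> (\<exists>n. V n \<subseteq> U))"
proof -
  obtain M d where md: "Metric_space M d" "X = Metric_space.mtopology M d"
    using assms(1) unfolding metrizable_space_def by blast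
  interpret Metric_space M d by (rule md(1))
  have aM: "a \<in> M" using assms(2) md(2) by simp
  define V where "V n = mball a (1 / (Suc n))" for n
  have "openin X (V n) \<and> a \<in> V n \<and> V (Suc n) \<subseteq> V n" for n
    unfolding V_def md(2) using aM by (auto intro!: mball_subset_concentric simp: frac_le)
  moreover have "\<exists>n. V n \<subseteq> U" if U: "openin X U" "a \<in> U" for U
  proof -
    have "U \<subseteq> M \<and> (\<forall>x. x \<in> U \<longrightarrow> (\<exists>r>0. mball x r \<subseteq> U))" using U(1) md(2) openin_mtopology by simp
    then obtain r where r: "r > 0" "mball a r \<subseteq> U" using U(2) by blast
    obtain n where "1 / Suc n < r" using r(1) by (metis nat_approx_posE)
    hence "V n \<subseteq> mball a r" unfolding V_def by (intro mball_subset_concentric) simp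
    thus ?thesis using r(2) by blast
  qed
  ultimately show ?thesis by blast
qed

lemma continuous_map_cmult [continuous_intros]:
  fixes f g :: "'a \<Rightarrow> complex"
  shows "continuous_map X euclidean f \<Longrightarrow> continuous_map X euclidean g \<Longrightarrow> continuous_map X euclidean (\<lambda>x. f x * g x)"
  by (simp add: continuous_map_atin tendsto_mult)

lemma continuous_map_Re [continuous_intros]:
  fixes f :: "'a \<Rightarrow> complex"
  shows "continuous_map X euclidean f \<Longrightarrow> continuous_map X euclidean (\<lambda>x. Re (f x))"
  by (simp add: continuous_map_atin tendsto_Re)

lemma topspace_circle: "topspace circle_top = sphere 0 1"
  by (simp add: circle_top_def)

lemma characters_hom:
  assumes "topological_ab_group X" "c \<in> characters X" shows "chr_hom c"
proof -
  have "topspace X = UNIV" using assms(1) unfolding topological_ab_group_def by blast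
  moreover have "continuous_map X circle_top c" using assms(2) unfolding characters_def by blast
  ultimately have "c x \<in> sphere 0 1" for x using continuous_map_image_subset_topspace topspace_circle by fastforce
  thus ?thesis using assms(2) unfolding characters_def chr_hom_def by simp
qed

definition subb :: "'a::ab_group_add topology \<Rightarrow> ('a \<Rightarrow> complex) set set" where
  "subb X = {{f \<in> characters X. f ` K \<subseteq> U} | K U. compactin X K \<and> openin circle_top U}"

lemma dual_group_alt: "dual_group X = topology_generated_by (subb X)"
  unfolding dual_group_def compact_open_topology_def subb_def by simp

lemma topspace_dual: "topspace (dual_group X) = characters X"
proof -
  have "characters X \<in> subb X" unfolding subb_def
    by (rule CollectI, rule exI[of _ "{}"], rule exI[of _ "sphere 0 1"]) (auto simp: circle_top_def)
  moreover have "\<Union>(subb X) \<subseteq> characters X" unfolding subb_def by auto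
  ultimately show ?thesis unfolding dual_group_alt topology_generated_by_topspace by blast
qed

lemma open_subb:
  assumes "compactin X K" "openin circle_top U"
  shows "openin (dual_group X) {f \<in> characters X. f ` K \<subseteq> U}"
  unfolding dual_group_alt by (rule topology_generated_by_Basis) (use assms in \<open>auto simp: subb_def\<close>)

lemma open_point:
  assumes "topological_ab_group X" "open Op"
  shows "openin (dual_group X) {f \<in> characters X. f y \<in> Op}"
proof -
  have "compactin X {y}" using assms(1) unfolding topological_ab_group_def by simp
  moreover have "openin circle_top (sphere 0 1 \<inter> Op)" unfolding circle_top_def using assms(2) by blast
  ultimately have "openin (dual_group X) {f \<in> characters X. f ` {y} \<subseteq> sphere 0 1 \<inter> Op}" by (rule open_subb)
  moreover have "{f \<in> characters X. f ` {y} \<subseteq> sphere 0 1 \<inter> Op} = {f \<in> characters X. f y \<in> Op}"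
    using characters_hom[OF assms(1)] unfolding chr_hom_def by auto
  ultimately show ?thesis by simp
qed

definition Gen :: "'a::ab_group_add topology \<Rightarrow> 'a set \<Rightarrow> ('a \<Rightarrow> complex) \<Rightarrow> ('a \<Rightarrow> complex) set" where
  "Gen X S c = {f \<in> characters X. \<forall>y\<in>S. Re (f y * c y) \<ge> 0}"

lemma closed_Gen:
  assumes "topological_ab_group X"
  shows "closedin (dual_group X) (Gen X S c)"
proof -
  have "open {z::complex. Re (z * c y) < 0}" for y
    by (intro open_Collect_less continuous_intros)
  hence "openin (dual_group X) (\<Union>y\<in>S. {f \<in> characters X. f y \<in> {z. Re (z * c y) < 0}})"
    using open_point[OF assms] by blast
  moreover have "(\<Union>y\<in>S. {f \<in> characters X. f y \<in> {z. Re (z * c y) < 0}}) = topspace (dual_group X) - Gen X S c"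
    unfolding topspace_dual Gen_def by auto
  ultimately show ?thesis unfolding closedin_def by (auto simp: topspace_dual Gen_def)
qed

lemma Hausdorff_dual:
  assumes "topological_ab_group X"
  shows "Hausdorff_space (dual_group X)"
  unfolding Hausdorff_space_def topspace_dual
proof (intro allI impI)
  fix f g assume fg: "f \<in> characters X \<and> g \<in> characters X \<and> f \<noteq> g"
  then obtain y where y: "f y \<noteq> g y" by blast
  define r where "r = dist (f y) (g y) / 2"
  have r: "r > 0" using y unfolding r_def by simp
  let ?U = "{h \<in> characters X. h y \<in> ball (f y) r}"
  let ?V = "{h \<in> characters X. h y \<in> ball (g y) r}"
  have "openin (dual_group X) ?U" "openin (dual_group X) ?V" using open_point[OF assms, of "ball _ r"] by (auto simp del: mem_ball)
  moreover have "f \<in> ?U" "g \<in> ?V" using fg r by auto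
  moreover have "disjnt ?U ?V"
  proof -
    have "ball (f y) r \<inter> ball (g y) r = {}" unfolding r_def
      by (intro disjoint_ballI) simp
    thus ?thesis unfolding disjnt_def by blast
  qed
  ultimately show "\<exists>U V. openin (dual_group X) U \<and> openin (dual_group X) V \<and> f \<in> U \<and> g \<in> V \<and> disjnt U V" by blast
qed

abbreviation PT :: "('a \<Rightarrow> complex) topology" where
  "PT \<equiv> product_topology (\<lambda>_. circle_top) UNIV"

lemma topspace_PT: "topspace PT = {f. \<forall>x. f x \<in> sphere 0 1}"
  by (auto simp: topspace_circle PiE_def extensional_def)

lemma proj_cont: "continuous_map PT euclidean (\<lambda>f. f x)"
proof -
  have "continuous_map PT circle_top (\<lambda>f. f x)" by (rule continuous_map_product_projection) simp
  thus ?thesis unfolding circle_top_def continuous_map_in_subtopology by blast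
qed

definition PolP :: "'a::ab_group_add set \<Rightarrow> ('a \<Rightarrow> complex) set" where
  "PolP V = {f \<in> topspace PT. (\<forall>x y. f (x + y) = f x * f y) \<and> (\<forall>x\<in>V. Re (f x) \<ge> 0)}"

lemma closed_PolP: "closedin PT (PolP V)"
proof -
  have a1: "closedin PT {f \<in> topspace PT. f (fst p + snd p) - f (fst p) * f (snd p) \<in> {0}}" for p
    by (rule closedin_continuous_map_preimage) (auto intro!: continuous_intros proj_cont)
  have a2: "closedin PT {f \<in> topspace PT. Re (f x) \<in> (if x \<in> V then {0..} else UNIV)}" for x
    by (rule closedin_continuous_map_preimage) (auto intro!: continuous_intros proj_cont)
  have c1: "closedin PT (\<Inter>p\<in>UNIV. {f \<in> topspace PT. f (fst p + snd p) - f (fst p) * f (snd p) \<in> {0}})"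
    by (rule closedin_INT) (use a1 in auto)
  have c2: "closedin PT (\<Inter>x\<in>UNIV. {f \<in> topspace PT. Re (f x) \<in> (if x \<in> V then {0..} else UNIV)})"
    by (rule closedin_INT) (use a2 in auto)
  have "PolP V = (\<Inter>p\<in>UNIV. {f \<in> topspace PT. f (fst p + snd p) - f (fst p) * f (snd p) \<in> {0}}) \<inter>
        (\<Inter>x\<in>UNIV. {f \<in> topspace PT. Re (f x) \<in> (if x \<in> V then {0..} else UNIV)})"
    unfolding PolP_def by (auto, metis atLeast_iff)
  thus ?thesis using closedin_Int[OF c1 c2] by simp
qed

lemma compact_PolP: "compactin PT (PolP V)"
proof -
  have "compact_space circle_top" unfolding circle_top_def
    using compact_space_subtopology compactin_euclidean_iff compact_sphere by blast
  hence "compact_space PT" by (simp add: compact_space_product_topology)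
  thus ?thesis using closedin_compact_space closed_PolP by blast
qed

lemma PolP_hom: "f \<in> PolP V \<Longrightarrow> chr_hom f"
  unfolding PolP_def chr_hom_def topspace_PT by auto

lemma hom_cont:
  assumes "topological_ab_group X" "chr_hom f"
    and eq: "\<forall>e>0. \<exists>W. openin X W \<and> 0 \<in> W \<and> (\<forall>z a. z - a \<in> W \<longrightarrow> cmod (f z - f a) < e)"
  shows "continuous_map X circle_top f"
proof -
  have ts: "topspace X = UNIV" using assms(1) unfolding topological_ab_group_def by blast
  have "continuous_map X euclidean f"
    unfolding continuous_map_def
  proof (intro conjI allI impI)
    show "f \<in> topspace X \<rightarrow> topspace euclidean" by simp
    fix U :: "complex set" assume "openin euclidean U"
    hence oU: "open U" by simp
    show "openin X {x \<in> topspace X. f x \<in> U}"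
    proof (subst openin_subopen, intro ballI)
      fix z assume "z \<in> {x \<in> topspace X. f x \<in> U}"
      then obtain e where e: "e > 0" "ball (f z) e \<subseteq> U" using oU open_contains_ball by blast
      obtain W where W: "openin X W" "0 \<in> W" "\<forall>z a. z - a \<in> W \<longrightarrow> cmod (f z - f a) < e" using eq e(1) by blast
      have "openin X {y. y - z \<in> W}" by (rule tg_open_translate[OF assms(1) W(1)])
      moreover have "z \<in> {y. y - z \<in> W}" using W(2) by simp
      moreover have "{y. y - z \<in> W} \<subseteq> {x \<in> topspace X. f x \<in> U}"
      proof
        fix y assume "y \<in> {y. y - z \<in> W}"
        hence "cmod (f y - f z) < e" using W(3) by blast
        hence "f y \<in> ball (f z) e" by (simp add: dist_norm norm_minus_commute)
        thus "y \<in> {x \<in> topspace X. f x \<in> U}" using e(2) ts by blast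
      qed
      ultimately show "\<exists>T. openin X T \<and> z \<in> T \<and> T \<subseteq> {x \<in> topspace X. f x \<in> U}" by blast
    qed
  qed
  moreover have "f \<in> topspace X \<rightarrow> sphere 0 1" using assms(2) unfolding chr_hom_def by simp
  ultimately show ?thesis unfolding circle_top_def continuous_map_in_subtopology by blast
qed

lemma PolP_chars:
  assumes "topological_ab_group X" "openin X V" "0 \<in> V"
  shows "PolP V \<subseteq> characters X"
proof
  fix f assume f: "f \<in> PolP V"
  have h: "chr_hom f" by (rule PolP_hom[OF f])
  have pv: "\<forall>x\<in>V. Re (f x) \<ge> 0" using f unfolding PolP_def by blast
  have "continuous_map X circle_top f"
  proof (rule hom_cont[OF assms(1) h], intro allI impI)
    fix e :: real assume "e > 0"
    from polar_equicont[OF assms this] h pv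
    show "\<exists>W. openin X W \<and> 0 \<in> W \<and> (\<forall>z a. z - a \<in> W \<longrightarrow> cmod (f z - f a) < e)" by blast
  qed
  thus "f \<in> characters X" using h unfolding characters_def chr_hom_def by blast
qed

lemma ascoli_open:
  assumes tg: "topological_ab_group X" and V: "openin X V" "0 \<in> V"
    and K: "compactin X K" and Uc: "openin circle_top Uc"
  shows "openin (subtopology PT (PolP V)) {g \<in> PolP V. g ` K \<subseteq> Uc}"
proof (subst openin_subopen, intro ballI)
  fix f assume f: "f \<in> {g \<in> PolP V. g ` K \<subseteq> Uc}"
  obtain Op where Op: "open Op" "Uc = Op \<inter> sphere 0 1"
    using Uc unfolding circle_top_def openin_subtopology by auto
  have "\<forall>x\<in>K. \<exists>e>0. ball (f x) e \<subseteq> Op"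
    using f Op by (metis (no_types, lifting) IntD1 image_subset_iff mem_Collect_eq open_contains_ball)
  then obtain e where e: "\<forall>x\<in>K. e x > 0 \<and> ball (f x) (e x) \<subseteq> Op" by metis
  have "\<forall>x\<in>K. \<exists>W. openin X W \<and> 0 \<in> W \<and> (\<forall>g. chr_hom g \<and> (\<forall>y\<in>V. Re (g y) \<ge> 0) \<longrightarrow>
            (\<forall>z a. z - a \<in> W \<longrightarrow> cmod (g z - g a) < e x / 3))"
  proof
    fix x assume "x \<in> K"
    hence "e x / 3 > 0" using e by simp
    from polar_equicont[OF tg V this] show "\<exists>W. openin X W \<and> 0 \<in> W \<and> (\<forall>g. chr_hom g \<and> (\<forall>y\<in>V. Re (g y) \<ge> 0) \<longrightarrow>
            (\<forall>z a. z - a \<in> W \<longrightarrow> cmod (g z - g a) < e x / 3))" .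
  qed
  then obtain W where W: "\<forall>x\<in>K. openin X (W x) \<and> 0 \<in> W x \<and> (\<forall>g. chr_hom g \<and> (\<forall>y\<in>V. Re (g y) \<ge> 0) \<longrightarrow>
            (\<forall>z a. z - a \<in> W x \<longrightarrow> cmod (g z - g a) < e x / 3))" by metis
  let ?T = "\<lambda>x. {z. z - x \<in> W x}"
  have o: "\<forall>U\<in>?T ` K. openin X U" using W tg_open_translate[OF tg] by blast
  have c: "K \<subseteq> \<Union>(?T ` K)"
  proof
    fix z assume "z \<in> K"
    hence "z \<in> ?T z" using W by simp
    thus "z \<in> \<Union>(?T ` K)" using \<open>z \<in> K\<close> by blast
  qed
  have "\<exists>F. finite F \<and> F \<subseteq> ?T ` K \<and> K \<subseteq> \<Union>F"
    using K[unfolded compactin_def] o c by blast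
  then obtain F where F: "finite F" "F \<subseteq> ?T ` K" "K \<subseteq> \<Union>F" by blast
  then obtain K0 where K0: "K0 \<subseteq> K" "finite K0" "F = ?T ` K0" using finite_subset_image by meson
  define N' where "N' = (\<Inter>x\<in>K0. {g \<in> topspace PT. g x \<in> ball (f x) (e x / 3)}) \<inter> topspace PT"
  have "openin PT N'" unfolding N'_def
    by (rule openin_INT[OF K0(2)], rule openin_continuous_map_preimage[OF proj_cont]) simp
  hence "openin (subtopology PT (PolP V)) (N' \<inter> PolP V)" by (rule openin_subtopology_Int)
  moreover have "f \<in> N' \<inter> PolP V"
    using f e K0 unfolding N'_def PolP_def by auto
  moreover have "N' \<inter> PolP V \<subseteq> {g \<in> PolP V. g ` K \<subseteq> Uc}"
  proof
    fix g assume g: "g \<in> N' \<inter> PolP V"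
    have "g ` K \<subseteq> Uc"
    proof
      fix w assume "w \<in> g ` K"
      then obtain z where z: "z \<in> K" "w = g z" by blast
      then obtain x where x: "x \<in> K0" "z - x \<in> W x" using F(3) K0(3) by blast
      have xK: "x \<in> K" using x K0 by blast
      have gh: "chr_hom g" "\<forall>y\<in>V. Re (g y) \<ge> 0" using g PolP_hom unfolding PolP_def by auto
      have "\<forall>g. chr_hom g \<and> (\<forall>y\<in>V. Re (g y) \<ge> 0) \<longrightarrow>
            (\<forall>z a. z - a \<in> W x \<longrightarrow> cmod (g z - g a) < e x / 3)" using W xK by blast
      hence d1: "cmod (g z - g x) < e x / 3" using gh x(2) by blast
      have d2: "cmod (g x - f x) < e x / 3" using g x(1) unfolding N'_def by (simp add: dist_norm norm_minus_commute)
      have "cmod (g z - f x) \<le> cmod (g z - g x) + cmod (g x - f x)" by (rule norm_diff_triangle_le[of _ "g x"]) simp_all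
      moreover have "e x > 0" using e xK by blast
      ultimately have "cmod (g z - f x) < e x" using d1 d2 by linarith
      hence "g z \<in> ball (f x) (e x)" by (simp add: dist_norm norm_minus_commute)
      hence "g z \<in> Op" using e xK by blast
      moreover have "g z \<in> sphere 0 1" using g unfolding PolP_def topspace_PT by blast
      ultimately show "w \<in> Uc" using z Op(2) by blast
    qed
    thus "g \<in> {g \<in> PolP V. g ` K \<subseteq> Uc}" using g by blast
  qed
  ultimately show "\<exists>T. openin (subtopology PT (PolP V)) T \<and> f \<in> T \<and> T \<subseteq> {g \<in> PolP V. g ` K \<subseteq> Uc}" by blast
qed

lemma Union_subb: "\<Union>(subb X) = characters X"
  using topspace_dual[of X] unfolding dual_group_alt topology_generated_by_topspace .

lemma polar_compact:
  assumes tg: "topological_ab_group X" and V: "openin X V" "0 \<in> V"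
  shows "compactin (dual_group X) (PolP V)"
proof -
  have sub: "PolP V \<subseteq> characters X" by (rule PolP_chars[OF tg V])
  have ts: "topspace (subtopology PT (PolP V)) = PolP V"
    using closedin_subset[OF closed_PolP] by (auto simp: topspace_subtopology)
  have "continuous_map (subtopology PT (PolP V)) (dual_group X) id"
    unfolding dual_group_alt
  proof (rule continuous_on_generated_topo)
    fix U assume "U \<in> subb X"
    then obtain K Uc where KU: "U = {f \<in> characters X. f ` K \<subseteq> Uc}" "compactin X K" "openin circle_top Uc"
      unfolding subb_def by blast
    have "id -` U \<inter> topspace (subtopology PT (PolP V)) = {g \<in> PolP V. g ` K \<subseteq> Uc}"
      unfolding ts using sub KU(1) by auto
    thus "openin (subtopology PT (PolP V)) (id -` U \<inter> topspace (subtopology PT (PolP V)))"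
      using ascoli_open[OF tg V KU(2,3)] by simp
  next
    show "id ` topspace (subtopology PT (PolP V)) \<subseteq> \<Union>(subb X)" using ts sub Union_subb[of X] by simp
  qed
  moreover have "compactin (subtopology PT (PolP V)) (PolP V)"
    using compact_PolP compactin_subtopology by blast
  ultimately have "compactin (dual_group X) (id ` PolP V)" using image_compactin by blast
  thus ?thesis by simp
qed

lemma PolP_Gen:
  assumes tg: "topological_ab_group X" and V: "openin X V" "0 \<in> V"
  shows "PolP V = Gen X V (\<lambda>_. 1)"
proof
  show "PolP V \<subseteq> Gen X V (\<lambda>_. 1)" using PolP_chars[OF assms] unfolding PolP_def Gen_def by auto
  show "Gen X V (\<lambda>_. 1) \<subseteq> PolP V"
  proof
    fix f assume "f \<in> Gen X V (\<lambda>_. 1)"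
    hence "f \<in> characters X" "\<forall>y\<in>V. Re (f y) \<ge> 0" unfolding Gen_def by auto
    thus "f \<in> PolP V" using characters_hom[OF tg] unfolding PolP_def chr_hom_def topspace_PT by auto
  qed
qed

lemma real_close_aux:
  fixes x y u v :: real
  assumes "x^2 + u^2 = 1" "y^2 + v^2 = 1" "x > 9/10" "y > 9/10"
  shows "x * y + u * v \<ge> 0"
proof -
  have "(9/10)^2 < x^2" using assms(3) by (intro power_strict_mono) auto
  hence "u^2 < 19/100" using assms(1) by (simp add: power2_eq_square)
  have "(9/10)^2 < y^2" using assms(4) by (intro power_strict_mono) auto
  hence "v^2 < 19/100" using assms(2) by (simp add: power2_eq_square)
  have "9/10 * (9/10) < x * y" using assms(3,4) by (intro mult_strict_mono) auto
  hence p: "81/100 < x * y" by simp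
  have "0 \<le> (u + v)^2" by simp
  hence "0 \<le> u^2 + v^2 + 2 * (u * v)" by (simp add: power2_eq_square algebra_simps)
  hence "- 19/100 < u * v" using \<open>u^2 < 19/100\<close> \<open>v^2 < 19/100\<close> by linarith
  thus ?thesis using p by linarith
qed

lemma circle_close:
  fixes a b :: complex
  assumes "cmod a = 1" "cmod b = 1" "Re a > 9/10" "Re b > 9/10"
  shows "Re (a * cnj b) \<ge> 0"
proof -
  have na: "(Re a)^2 + (Im a)^2 = 1" using assms(1) by (metis cmod_power2 power_one)
  have nb: "(Re b)^2 + (Im b)^2 = 1" using assms(2) by (metis cmod_power2 power_one)
  have "Re (a * cnj b) = Re a * Re b + Im a * Im b" by simp
  thus ?thesis using real_close_aux[OF na nb assms(3,4)] by simp
qed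

lemma chars_cont_euclid:
  assumes "c \<in> characters X" shows "continuous_map X euclidean c"
  using assms unfolding characters_def circle_top_def continuous_map_in_subtopology by blast

lemma continuous_map_cnj [continuous_intros]:
  fixes f :: "'a \<Rightarrow> complex"
  shows "continuous_map X euclidean f \<Longrightarrow> continuous_map X euclidean (\<lambda>x. cnj (f x))"
  by (simp add: continuous_map_atin tendsto_cnj)

lemma fip_finite:
  assumes "compactin D Q" "\<forall>y\<in>Y. closedin D (G y)" "Q \<inter> (\<Inter>y\<in>Y. G y) = {}"
  shows "\<exists>S. finite S \<and> S \<subseteq> Y \<and> Q \<inter> (\<Inter>y\<in>S. G y) = {}"
proof (rule ccontr)
  assume na: "\<not> ?thesis"
  have "\<forall>C\<in>G ` Y. closedin D C" using assms(2) by blast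
  moreover have "\<forall>F. finite F \<and> F \<subseteq> G ` Y \<longrightarrow> Q \<inter> \<Inter>F \<noteq> {}"
  proof (intro allI impI)
    fix F assume F: "finite F \<and> F \<subseteq> G ` Y"
    then obtain S where S: "S \<subseteq> Y" "finite S" "F = G ` S" using finite_subset_image by meson
    have "Q \<inter> (\<Inter>y\<in>S. G y) \<noteq> {}" using na S(1,2) by blast
    thus "Q \<inter> \<Inter>F \<noteq> {}" using S(3) by simp
  qed
  ultimately have "Q \<inter> \<Inter>(G ` Y) \<noteq> {}" using assms(1) unfolding compactin_fip by blast
  thus False using assms(3) by simp
qed

lemma chars_trivial_quot:
  assumes tg: "topological_ab_group X" and c: "c \<in> characters X" "c0 \<in> characters X"
    and h: "\<forall>y. Re (c y * cnj (c0 y)) \<ge> 0"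
  shows "c = c0"
proof
  fix y
  have hc: "chr_hom c" "chr_hom c0" using characters_hom[OF tg] c by auto
  define w where "w = (\<lambda>y. c y * cnj (c0 y))"
  have "chr_hom w" using hc unfolding chr_hom_def w_def by (simp add: norm_mult)
  hence "w y = 1" using chr_trivial h unfolding w_def by blast
  hence "c y * (cnj (c0 y) * c0 y) = c0 y" unfolding w_def by (metis mult.assoc mult_1)
  moreover have "cnj (c0 y) * c0 y = 1" using hc(2) cmod1_inv unfolding chr_hom_def by (metis mult.commute)
  ultimately show "c y = c0 y" by simp
qed

lemma kspace_main:
  assumes tg: "topological_ab_group X" and mz: "metrizable_space X"
    and FS: "F \<subseteq> characters X"
    and hyp: "\<forall>K. compactin (dual_group X) K \<longrightarrow> closedin (subtopology (dual_group X) K) (K \<inter> F)"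
  shows "closedin (dual_group X) F"
proof -
  let ?D = "dual_group X"
  have ts: "topspace X = UNIV" using tg unfolding topological_ab_group_def by blast
  have cc: "closedin ?D (C \<inter> F)" if "compactin ?D C" "closedin ?D C" for C
  proof -
    have "closedin (subtopology ?D C) (C \<inter> F)" using hyp that(1) by blast
    thus ?thesis by (rule closedin_trans_full[OF _ that(2)])
  qed
  have "openin ?D (topspace ?D - F)"
  proof (subst openin_subopen, intro ballI)
    fix c0 assume c0: "c0 \<in> topspace ?D - F"
    hence c0C: "c0 \<in> characters X" "c0 \<notin> F" by (auto simp: topspace_dual)
    have h0: "chr_hom c0" using characters_hom[OF tg c0C(1)] .
    define G0 where "G0 = {y. Re (c0 y) > 9/10}"
    have "open {z::complex. Re z > 9/10}" by (intro open_Collect_less continuous_intros)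
    hence "openin X {y \<in> topspace X. c0 y \<in> {z. Re z > 9/10}}"
      by (intro openin_continuous_map_preimage[OF chars_cont_euclid[OF c0C(1)]]) simp
    hence G0o: "openin X G0" unfolding G0_def ts by simp
    have "0 \<in> G0" unfolding G0_def using chr_hom_0[OF h0] by simp
    have "(0::'a) \<in> topspace X" using ts by simp
    from metrizable_base[OF mz this] obtain V' where V': "\<forall>n. openin X (V' n) \<and> 0 \<in> V' n \<and> V' (Suc n) \<subseteq> V' n"
        "\<forall>U. openin X U \<and> 0 \<in> U \<longrightarrow> (\<exists>n. V' n \<subseteq> U)"
      by blast
    have "\<exists>m. V' m \<subseteq> G0" using V'(2) G0o \<open>0 \<in> G0\<close> by blast
    then obtain m where m: "V' m \<subseteq> G0" by blast
    define V where "V n = V' (n + m)" for n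
    have Vo: "openin X (V n)" and V0: "0 \<in> V n" and Vd: "V (Suc n) \<subseteq> V n" for n
      unfolding V_def using V'(1) by auto
    have V'mono: "V' n' \<subseteq> V' n" if "n \<le> n'" for n n'
    proof (rule lift_Suc_antimono_le[of V'])
      show "V' (Suc k) \<subseteq> V' k" for k using V'(1) by blast
    qed (rule that)
    have Vmono: "V n' \<subseteq> V n" if "n \<le> n'" for n n'
      unfolding V_def by (rule V'mono) (use that in simp)
    have Vb: "\<exists>n. V n \<subseteq> U" if "openin X U" "0 \<in> U" for U
    proof -
      from V'(2)[rule_format, OF conjI[OF that]] obtain n where "V' n \<subseteq> U" by blast
      moreover have "V n \<subseteq> V' n" unfolding V_def by (rule V'mono) simp
      ultimately show ?thesis by blast
    qed
    have VG: "V n \<subseteq> G0" for n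
    proof -
      have "V n \<subseteq> V' m" unfolding V_def by (rule V'mono) simp
      thus ?thesis using m by blast
    qed
    define Pt where "Pt S = Gen X S (\<lambda>y. cnj (c0 y))" for S
    define Pol where "Pol S = Gen X S (\<lambda>_. 1)" for S
    define C where "C n = Pol (V n) \<inter> Pt (V n)" for n
    have Ccl: "closedin ?D (C n)" for n
      unfolding C_def Pol_def Pt_def by (intro closedin_Int closed_Gen[OF tg])
    have Ccp: "compactin ?D (C n)" for n
    proof -
      have "compactin ?D (Pol (V n))" unfolding Pol_def
        using polar_compact[OF tg Vo V0] PolP_Gen[OF tg Vo V0] by simp
      moreover have "C n \<subseteq> Pol (V n)" unfolding C_def by blast
      ultimately show ?thesis using closed_compactin[OF _ _ Ccl] by blast
    qed
    have CFcl: "closedin ?D (C n \<inter> F)" for n using cc[OF Ccp Ccl] .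
    have CFcp: "compactin ?D (C n \<inter> F)" for n using closed_compactin[OF Ccp Int_lower1 CFcl] .
    have Cch: "C n \<subseteq> characters X" for n unfolding C_def Pol_def Gen_def by blast
    have cover: "\<exists>n. c \<in> C n" if c: "c \<in> characters X" for c
    proof -
      have ce: "continuous_map X euclidean c" by (rule chars_cont_euclid[OF c])
      have ce0: "continuous_map X euclidean c0" by (rule chars_cont_euclid[OF c0C(1)])
      have cc1: "continuous_map X euclidean (\<lambda>y. Re (c y))"
        by (intro continuous_map_Re ce)
      have cc2: "continuous_map X euclidean (\<lambda>y. Re (c y * cnj (c0 y)))"
        by (intro continuous_map_Re continuous_map_cmult continuous_map_cnj ce ce0)
      define O1 where "O1 = {y \<in> topspace X. Re (c y) \<in> {0<..}}"
      define O2 where "O2 = {y \<in> topspace X. Re (c y * cnj (c0 y)) \<in> {0<..}}"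
      have "openin X O1" unfolding O1_def by (rule openin_continuous_map_preimage[OF cc1]) simp
      moreover have "openin X O2" unfolding O2_def by (rule openin_continuous_map_preimage[OF cc2]) simp
      ultimately have "openin X (O1 \<inter> O2)" by (rule openin_Int)
      moreover have "0 \<in> O1 \<inter> O2"
        unfolding O1_def O2_def using chr_hom_0[OF h0] chr_hom_0[OF characters_hom[OF tg c]] ts by simp
      ultimately obtain n where n: "V n \<subseteq> O1 \<inter> O2" using Vb by presburger
      have "\<forall>y\<in>V n. Re (c y) \<ge> 0 \<and> Re (c y * cnj (c0 y)) \<ge> 0"
      proof
        fix y assume "y \<in> V n"
        hence "y \<in> O1 \<inter> O2" using n by blast
        thus "Re (c y) \<ge> 0 \<and> Re (c y * cnj (c0 y)) \<ge> 0" unfolding O1_def O2_def by simp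
      qed
      hence "c \<in> C n" using c unfolding C_def Pol_def Pt_def Gen_def by simp
      thus ?thesis by blast
    qed
    have base: "\<exists>S. finite S \<and> Pt S \<inter> C 0 \<inter> F = {}"
    proof -
      have e: "(C 0 \<inter> F) \<inter> (\<Inter>y\<in>UNIV. Pt {y}) = {}"
      proof (rule ccontr)
        assume "(C 0 \<inter> F) \<inter> (\<Inter>y\<in>UNIV. Pt {y}) \<noteq> {}"
        then obtain c where c0: "c \<in> (C 0 \<inter> F) \<inter> (\<Inter>y\<in>UNIV. Pt {y})" by (meson ex_in_conv)
        hence c: "c \<in> C 0" "c \<in> F" "\<And>y. c \<in> Pt {y}" by auto
        have cc: "c \<in> characters X" using c(1) Cch[of 0] by (rule subsetD[rotated])
        have "\<forall>y. Re (c y * cnj (c0 y)) \<ge> 0"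
        proof
          fix y show "Re (c y * cnj (c0 y)) \<ge> 0" using c(3)[of y] unfolding Pt_def Gen_def by simp
        qed
        hence "c = c0" by (rule chars_trivial_quot[OF tg cc c0C(1)])
        thus False using c(2) c0C(2) by simp
      qed
      have cl: "\<forall>y\<in>UNIV. closedin ?D (Pt {y})" unfolding Pt_def using closed_Gen[OF tg] by simp
      from fip_finite[OF CFcp[of 0] cl e] obtain S where S: "finite S" "(C 0 \<inter> F) \<inter> (\<Inter>y\<in>S. Pt {y}) = {}"
        by auto
      have "Pt S \<inter> C 0 \<inter> F \<subseteq> (C 0 \<inter> F) \<inter> (\<Inter>y\<in>S. Pt {y})"
      proof
        fix c assume "c \<in> Pt S \<inter> C 0 \<inter> F"
        thus "c \<in> (C 0 \<inter> F) \<inter> (\<Inter>y\<in>S. Pt {y})" unfolding Pt_def Gen_def by auto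
      qed
      thus ?thesis using S by auto
    qed
    have step: "\<exists>S. finite S \<and> S \<subseteq> V n \<and> Z \<inter> Pt S \<inter> Pol S \<inter> C (Suc n) \<inter> F = {}"
      if Z: "closedin ?D Z" "Z \<inter> C n \<inter> F = {}" for Z n
    proof -
      have Qcl: "closedin ?D (Z \<inter> (C (Suc n) \<inter> F))" using Z(1) CFcl by (rule closedin_Int)
      have Qcp: "compactin ?D (Z \<inter> (C (Suc n) \<inter> F))" using closed_compactin[OF CFcp[of "Suc n"] Int_lower2 Qcl] .
      have e: "(Z \<inter> (C (Suc n) \<inter> F)) \<inter> (\<Inter>y\<in>V n. Pt {y} \<inter> Pol {y}) = {}"
      proof (rule ccontr)
        assume "(Z \<inter> (C (Suc n) \<inter> F)) \<inter> (\<Inter>y\<in>V n. Pt {y} \<inter> Pol {y}) \<noteq> {}"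
        then obtain c where "c \<in> (Z \<inter> (C (Suc n) \<inter> F)) \<inter> (\<Inter>y\<in>V n. Pt {y} \<inter> Pol {y})" by (meson ex_in_conv)
        hence c: "c \<in> Z" "c \<in> C (Suc n)" "c \<in> F" "\<And>y. y \<in> V n \<Longrightarrow> c \<in> Pt {y} \<inter> Pol {y}" by auto
        have cc: "c \<in> characters X" using c(2) Cch[of "Suc n"] by (rule subsetD[rotated])
        have "c \<in> Pol (V n)"
          unfolding Pol_def Gen_def using cc c(4) unfolding Pol_def Gen_def by auto
        moreover have "c \<in> Pt (V n)"
          unfolding Pt_def Gen_def using cc c(4) unfolding Pt_def Gen_def by auto
        ultimately have "c \<in> C n" unfolding C_def by simp
        hence "c \<in> Z \<inter> C n \<inter> F" using c(1,3) by simp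
        thus False using Z(2) by simp
      qed
      have cl: "\<forall>y\<in>V n. closedin ?D (Pt {y} \<inter> Pol {y})" unfolding Pt_def Pol_def using closed_Gen[OF tg] by auto
      from fip_finite[OF Qcp cl e] obtain S where S: "finite S" "S \<subseteq> V n" "(Z \<inter> (C (Suc n) \<inter> F)) \<inter> (\<Inter>y\<in>S. Pt {y} \<inter> Pol {y}) = {}"
        by auto
      have "Z \<inter> Pt S \<inter> Pol S \<inter> C (Suc n) \<inter> F \<subseteq> (Z \<inter> (C (Suc n) \<inter> F)) \<inter> (\<Inter>y\<in>S. Pt {y} \<inter> Pol {y})"
      proof
        fix c assume "c \<in> Z \<inter> Pt S \<inter> Pol S \<inter> C (Suc n) \<inter> F"
        thus "c \<in> (Z \<inter> (C (Suc n) \<inter> F)) \<inter> (\<Inter>y\<in>S. Pt {y} \<inter> Pol {y})" unfolding Pt_def Pol_def Gen_def by auto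
      qed
      thus ?thesis using S by auto
    qed
    define P where "P n x \<longleftrightarrow> closedin ?D (fst x) \<and> fst x \<inter> C n \<inter> F = {} \<and> (n = 0 \<longrightarrow> fst x = Pt (snd x) \<and> finite (snd x))"
      for n and x :: "('a \<Rightarrow> complex) set \<times> 'a set"
    define Q where "Q n x y \<longleftrightarrow> finite (snd y) \<and> snd y \<subseteq> V n \<and> fst y = fst x \<inter> Pt (snd y) \<inter> Pol (snd y)"
      for n and x y :: "('a \<Rightarrow> complex) set \<times> 'a set"
    have P0: "\<exists>x. P 0 x"
    proof -
      obtain S where S: "finite S" "Pt S \<inter> C 0 \<inter> F = {}" using base by blast
      have "closedin ?D (Pt S)" unfolding Pt_def by (rule closed_Gen[OF tg])
      hence "P 0 (Pt S, S)" unfolding P_def using S by simp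
      thus ?thesis by blast
    qed
    have PS: "\<exists>y. P (Suc n) y \<and> Q n x y" if "P n x" for x n
    proof -
      have Z: "closedin ?D (fst x)" "fst x \<inter> C n \<inter> F = {}" using that unfolding P_def by auto
      obtain S where S: "finite S" "S \<subseteq> V n" "fst x \<inter> Pt S \<inter> Pol S \<inter> C (Suc n) \<inter> F = {}"
        using step[OF Z] by blast
      have "closedin ?D (fst x \<inter> Pt S \<inter> Pol S)" using Z(1) unfolding Pt_def Pol_def
        by (intro closedin_Int closed_Gen[OF tg])
      hence "P (Suc n) (fst x \<inter> Pt S \<inter> Pol S, S)" unfolding P_def using S(3) by simp
      moreover have "Q n x (fst x \<inter> Pt S \<inter> Pol S, S)" unfolding Q_def using S by simp
      ultimately show ?thesis by blast
    qed
    obtain f where f: "\<And>n. P n (f n) \<and> Q n (f n) (f (Suc n))"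
      using dependent_nat_choice[of P Q, OF P0 PS] by blast
    define Z where "Z n = fst (f n)" for n
    define S where "S n = snd (f n)" for n
    have Zc: "Z n \<inter> C n \<inter> F = {}" for n using f[of n] unfolding P_def Z_def by blast
    have Z0: "Z 0 = Pt (S 0)" "finite (S 0)" using f[of 0] unfolding P_def Z_def S_def by auto
    have ZS: "Z (Suc n) = Z n \<inter> Pt (S (Suc n)) \<inter> Pol (S (Suc n))" "finite (S (Suc n))" "S (Suc n) \<subseteq> V n" for n
      using f[of n] unfolding Q_def Z_def S_def by auto
    define K where "K = insert 0 (\<Union>n. S (Suc n))"
    have KV: "K \<subseteq> V 0"
    proof
      fix y assume "y \<in> K"
      then consider "y = 0" | n where "y \<in> S (Suc n)" unfolding K_def by auto
      thus "y \<in> V 0"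
      proof cases
        case 1 thus ?thesis using V0 by simp
      next
        case (2 n) thus ?thesis using ZS(3)[of n] Vmono[of 0 n] by auto
      qed
    qed
    have Kc: "compactin X K"
      unfolding compactin_def
    proof (intro conjI allI impI)
      show "K \<subseteq> topspace X" using ts by simp
      fix \<U> assume U: "(\<forall>U\<in>\<U>. openin X U) \<and> K \<subseteq> \<Union>\<U>"
      have "0 \<in> \<Union>\<U>" using U unfolding K_def by auto
      then obtain U0 where U0: "U0 \<in> \<U>" "0 \<in> U0" by auto
      have "openin X U0" using U U0 by auto
      then obtain N where N: "V N \<subseteq> U0" using Vb[of U0] U0(2) by auto
      define R where "R = (\<Union>n\<in>{..<N}. S (Suc n))"
      have Rf: "finite R" unfolding R_def using ZS(2) by auto
      have RK: "R \<subseteq> K" unfolding R_def K_def by auto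
      have "\<forall>r\<in>R. \<exists>U. U \<in> \<U> \<and> r \<in> U" using RK U by auto
      then obtain g where g: "\<forall>r\<in>R. g r \<in> \<U> \<and> r \<in> g r" by metis
      show "\<exists>\<F>. finite \<F> \<and> \<F> \<subseteq> \<U> \<and> K \<subseteq> \<Union>\<F>"
      proof (intro exI conjI)
        show "finite (insert U0 (g ` R))" using Rf by simp
        show "insert U0 (g ` R) \<subseteq> \<U>" using U0 g by auto
        show "K \<subseteq> \<Union>(insert U0 (g ` R))"
        proof
          fix y assume "y \<in> K"
          then consider "y = 0" | n where "y \<in> S (Suc n)" unfolding K_def by auto
          thus "y \<in> \<Union>(insert U0 (g ` R))"
          proof cases
            case 1 thus ?thesis using U0 by auto
          next
            case (2 n)
            show ?thesis
            proof (cases "n < N")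
              case True
              hence "y \<in> R" unfolding R_def using 2 by auto
              thus ?thesis using g by auto
            next
              case False
              hence "V n \<subseteq> V N" using Vmono[of N n] by simp
              hence "y \<in> V N" using 2 ZS(3)[of n] by auto
              thus ?thesis using N by auto
            qed
          qed
        qed
      qed
    qed
    define Gs where "Gs = sphere (0::complex) 1 \<inter> {z. Re z > 9/10}"
    have "open {z::complex. Re z > 9/10}" by (intro open_Collect_less continuous_intros)
    hence Gso: "openin circle_top Gs" unfolding Gs_def circle_top_def by (rule openin_open_Int)
    define W1 where "W1 = (\<Inter>y\<in>S 0. {c \<in> characters X. c y \<in> {z. Re (z * cnj (c0 y)) > 0}}) \<inter> topspace ?D"
    define W2 where "W2 = {c \<in> characters X. c ` K \<subseteq> Gs}"
    have W1o: "openin ?D W1" unfolding W1_def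
    proof (rule openin_INT[OF Z0(2)])
      fix y
      have "open {z. Re (z * cnj (c0 y)) > 0}" by (intro open_Collect_less continuous_intros)
      thus "openin ?D {c \<in> characters X. c y \<in> {z. Re (z * cnj (c0 y)) > 0}}" by (rule open_point[OF tg])
    qed
    have W2o: "openin ?D W2" unfolding W2_def by (rule open_subb[OF Kc Gso])
    have c0W: "c0 \<in> W1 \<inter> W2"
    proof
      have "Re (c0 y * cnj (c0 y)) > 0" for y using h0 cmod1_inv unfolding chr_hom_def by simp
      thus "c0 \<in> W1" unfolding W1_def using c0C(1) topspace_dual[of X] by simp
      have "c0 ` K \<subseteq> Gs"
      proof
        fix w assume "w \<in> c0 ` K"
        then obtain y where y: "y \<in> K" "w = c0 y" by blast
        hence "y \<in> G0" using KV VG[of 0] by blast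
        thus "w \<in> Gs" unfolding Gs_def G0_def using h0 y(2) unfolding chr_hom_def by simp
      qed
      thus "c0 \<in> W2" unfolding W2_def using c0C(1) by simp
    qed
    have WZ: "W1 \<inter> W2 \<subseteq> Z n" for n
    proof (induction n)
      case 0
      show ?case
      proof
        fix c assume c: "c \<in> W1 \<inter> W2"
        hence "c \<in> characters X" "\<forall>y\<in>S 0. Re (c y * cnj (c0 y)) > 0" unfolding W1_def W2_def by auto
        hence "c \<in> Pt (S 0)" unfolding Pt_def Gen_def by auto
        thus "c \<in> Z 0" using Z0(1) by simp
      qed
    next
      case (Suc n)
      show ?case
      proof
        fix c assume c: "c \<in> W1 \<inter> W2"
        hence cn: "c \<in> Z n" using Suc.IH by blast
        have cc: "c \<in> characters X" "c ` K \<subseteq> Gs" using c unfolding W2_def by auto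
        have hc: "chr_hom c" by (rule characters_hom[OF tg cc(1)])
        have yy: "Re (c y * cnj (c0 y)) \<ge> 0 \<and> Re (c y * 1) \<ge> 0" if y: "y \<in> S (Suc n)" for y
        proof -
          have yK: "y \<in> K" unfolding K_def using y by auto
          hence "c y \<in> Gs" using cc(2) by blast
          hence r1: "Re (c y) > 9/10" "cmod (c y) = 1" unfolding Gs_def by auto
          have "y \<in> G0" using yK KV VG[of 0] by blast
          hence r2: "Re (c0 y) > 9/10" unfolding G0_def by simp
          have "cmod (c0 y) = 1" using h0 unfolding chr_hom_def by simp
          hence "Re (c y * cnj (c0 y)) \<ge> 0" using circle_close r1 r2 by blast
          thus ?thesis using r1 by simp
        qed
        have "c \<in> Pt (S (Suc n))" unfolding Pt_def Gen_def using cc(1) yy by blast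
        moreover have "c \<in> Pol (S (Suc n))" unfolding Pol_def Gen_def using cc(1) yy by blast
        ultimately show "c \<in> Z (Suc n)" using cn ZS(1)[of n] by simp
      qed
    qed
    have WF: "W1 \<inter> W2 \<subseteq> topspace ?D - F"
    proof
      fix c assume c: "c \<in> W1 \<inter> W2"
      hence cc: "c \<in> characters X" unfolding W2_def by simp
      obtain n where n: "c \<in> C n" using cover[OF cc] by blast
      have "c \<in> Z n" using WZ[of n] c by blast
      hence "c \<notin> F" using Zc[of n] n by blast
      thus "c \<in> topspace ?D - F" using cc topspace_dual[of X] by simp
    qed
    show "\<exists>T. openin ?D T \<and> c0 \<in> T \<and> T \<subseteq> topspace ?D - F"
      using openin_Int[OF W1o W2o] c0W WF by blast
  qed
  thus ?thesis unfolding closedin_def using FS topspace_dual[of X] by auto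
qed

theorem mainTheorem10:
  fixes X :: "'a::ab_group_add topology"
  assumes "topological_ab_group X"
    and "metrizable_space X"
  shows "Hausdorff_space (dual_group X) \<and> k_space (dual_group X)"
proof
  show "Hausdorff_space (dual_group X)" by (rule Hausdorff_dual[OF assms(1)])
  show "k_space (dual_group X)" unfolding k_space_def
  proof (intro allI impI)
    fix S assume S: "S \<subseteq> topspace (dual_group X)"
    show "closedin (dual_group X) S \<longleftrightarrow>
      (\<forall>K. compactin (dual_group X) K \<longrightarrow> closedin (subtopology (dual_group X) K) (K \<inter> S))"
    proof
      assume cS: "closedin (dual_group X) S"
      show "\<forall>K. compactin (dual_group X) K \<longrightarrow> closedin (subtopology (dual_group X) K) (K \<inter> S)"
      proof (intro allI impI)
        fix K assume "compactin (dual_group X) K"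
        have "K \<inter> S = S \<inter> K" by blast
        thus "closedin (subtopology (dual_group X) K) (K \<inter> S)" unfolding closedin_subtopology using cS by blast
      qed
    next
      assume hyp: "\<forall>K. compactin (dual_group X) K \<longrightarrow> closedin (subtopology (dual_group X) K) (K \<inter> S)"
      have SC: "S \<subseteq> characters X" using S topspace_dual[of X] by simp
      show "closedin (dual_group X) S" by (rule kspace_main[OF assms SC hyp])
    qed
  qed
qed

end
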